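(* For the unit-sum normalization, there is an absolute constant $c>0$ such that for every $n\ge1$, random priority on $n$ agents and $n$ items satisfies $ar(RP)\ge c/\sqrt n$.
   Context: Agents $N=\{1,\dots,n\}$, items $M=\{1,\dots,n\}$, outcomes are bijections $\mu$ ($O$ the set of outcomes). Unit-sum valuation functions: injective $u_i:M\to\mathbb R_{\ge0}$ with $\sum_{j\in M}u_i(j)=1$; $V^n$ the set of profiles. Random priority (RP) picks a uniformly random ordering of the agents and in that order gives each agent its most preferred still-unassigned item. $ar(J)=\inf_{\mathbf u\in V^n}\mathbb E[\sum_i u_i(J(\mathbf u)_i)]/\max_{\mu\in O}\sum_i u_i(\mu_i)$. *)

theory Defs
  imports Complex_Main "HOL-Combinatorics.Combinatorics"
begin

text \<open>Agents and items are both indexed by the set {..<n} (0-based, i.e. {1..n} shifted).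
  A profile is u :: nat => nat => real, u i j = value of agent i for item j.\<close>

definition unit_sum_profile :: "nat \<Rightarrow> (nat \<Rightarrow> nat \<Rightarrow> real) \<Rightarrow> bool" where
  "unit_sum_profile n u \<longleftrightarrow>
     (\<forall>i<n. inj_on (u i) {..<n} \<and> (\<forall>j<n. 0 \<le> u i j) \<and> (\<Sum>j<n. u i j) = 1)"

fun serial_dict :: "(nat \<Rightarrow> nat \<Rightarrow> real) \<Rightarrow> nat set \<Rightarrow> nat list \<Rightarrow> (nat \<Rightarrow> nat)" where
  "serial_dict u R [] = (\<lambda>i. 0)"
| "serial_dict u R (i # is) =
     (let j = (ARG_MAX (u i) j. j \<in> R) in (serial_dict u (R - {j}) is)(i := j))"

definition welfare :: "nat \<Rightarrow> (nat \<Rightarrow> nat \<Rightarrow> real) \<Rightarrow> (nat \<Rightarrow> nat) \<Rightarrow> real" where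
  "welfare n u \<mu> = (\<Sum>i<n. u i (\<mu> i))"

definition RP_welfare :: "nat \<Rightarrow> (nat \<Rightarrow> nat \<Rightarrow> real) \<Rightarrow> real" where
  "RP_welfare n u =
     (\<Sum>\<sigma>\<in>permutations_of_set {..<n}. welfare n u (serial_dict u {..<n} \<sigma>))
       / real (card (permutations_of_set {..<n}))"

definition opt_welfare :: "nat \<Rightarrow> (nat \<Rightarrow> nat \<Rightarrow> real) \<Rightarrow> real" where
  "opt_welfare n u = Max {welfare n u \<mu> | \<mu>. \<mu> permutes {..<n}}"

definition approx_ratio_RP :: "nat \<Rightarrow> real" where
  "approx_ratio_RP n = (INF u \<in> {u. unit_sum_profile n u}. RP_welfare n u / opt_welfare n u)"

end

theory Submission
  imports Defs
begin



abbreviation pk :: "(nat \<Rightarrow> nat \<Rightarrow> real) \<Rightarrow> nat \<Rightarrow> nat set \<Rightarrow> nat" where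
  "pk u i S \<equiv> arg_max (u i) (\<lambda>j. j \<in> S)"

lemma pk_prop:
  fixes f :: "nat \<Rightarrow> real"
  assumes "finite S" "S \<noteq> {}"
  shows "arg_max f (\<lambda>j. j\<in>S) \<in> S \<and> (\<forall>y\<in>S. f y \<le> f (arg_max f (\<lambda>j. j\<in>S)))"
proof -
  have "Max (f ` S) \<in> f ` S" by (rule Max_in) (use assms in auto)
  then obtain x where x1: "x \<in> S" "f x = Max (f ` S)" by auto
  have x: "x \<in> S" "\<forall>y\<in>S. f y \<le> f x"
    using x1 assms by auto
  show ?thesis
    by (rule arg_maxI[where x = x]) (use x in auto)
qed

definition TT :: "(nat \<Rightarrow> nat \<Rightarrow> real) \<Rightarrow> nat set \<Rightarrow> nat set \<Rightarrow> real" where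
  "TT u A S = (\<Sum>\<sigma>\<in>permutations_of_set A. \<Sum>a\<in>A. u a (serial_dict u S \<sigma> a))"

lemma sum_perm_rec:
  assumes "finite A" "A \<noteq> {}"
  shows "(\<Sum>\<sigma>\<in>permutations_of_set A. g \<sigma>) = (\<Sum>i\<in>A. \<Sum>xs\<in>permutations_of_set (A-{i}). g (i#xs))"
proof -
  have "(\<Sum>\<sigma>\<in>permutations_of_set A. g \<sigma>) = (\<Sum>\<sigma>\<in>(\<Union>x\<in>A. (\<lambda>xs. x # xs) ` permutations_of_set (A - {x})). g \<sigma>)"
    using permutations_of_set_nonempty[OF assms(2)] by simp
  also have "\<dots> = (\<Sum>i\<in>A. \<Sum>\<sigma>\<in>(\<lambda>xs. i # xs) ` permutations_of_set (A - {i}). g \<sigma>)"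
    by (rule sum.UNION_disjoint) (use assms in auto)
  also have "\<dots> = (\<Sum>i\<in>A. \<Sum>xs\<in>permutations_of_set (A-{i}). g (i#xs))"
    by (rule sum.cong) (auto simp: sum.reindex inj_on_def)
  finally show ?thesis .
qed

lemma TT_rec:
  assumes "finite A" "A \<noteq> {}"
  shows "TT u A S = (\<Sum>i\<in>A. fact (card A - 1) * u i (pk u i S) + TT u (A-{i}) (S - {pk u i S}))"
proof -
  have "TT u A S = (\<Sum>i\<in>A. \<Sum>xs\<in>permutations_of_set (A-{i}). \<Sum>a\<in>A. u a (serial_dict u S (i#xs) a))"
    unfolding TT_def by (rule sum_perm_rec[OF assms])
  also have "\<dots> = (\<Sum>i\<in>A. \<Sum>xs\<in>permutations_of_set (A-{i}). u i (pk u i S) + (\<Sum>a\<in>A-{i}. u a (serial_dict u (S - {pk u i S}) xs a)))"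
  proof (intro sum.cong refl)
    fix i xs assume i: "i \<in> A"
    have "(\<Sum>a\<in>A. u a (serial_dict u S (i#xs) a)) = u i (serial_dict u S (i#xs) i) + (\<Sum>a\<in>A-{i}. u a (serial_dict u S (i#xs) a))"
      by (rule sum.remove[OF assms(1) i])
    also have "\<dots> = u i (pk u i S) + (\<Sum>a\<in>A-{i}. u a (serial_dict u (S - {pk u i S}) xs a))"
      by (auto simp: Let_def intro!: sum.cong)
    finally show "(\<Sum>a\<in>A. u a (serial_dict u S (i#xs) a)) = u i (pk u i S) + (\<Sum>a\<in>A-{i}. u a (serial_dict u (S - {pk u i S}) xs a))" .
  qed
  also have "\<dots> = (\<Sum>i\<in>A. fact (card A - 1) * u i (pk u i S) + TT u (A-{i}) (S - {pk u i S}))"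
    using assms by (auto simp: sum.distrib TT_def card_Diff_singleton intro!: sum.cong)
  finally show ?thesis .
qed



lemma u_nonneg: "unit_sum_profile n u \<Longrightarrow> i < n \<Longrightarrow> j < n \<Longrightarrow> 0 \<le> u i j"
  by (simp add: unit_sum_profile_def)

lemma u_le1: assumes "unit_sum_profile n u" "i < n" "j < n" shows "u i j \<le> 1"
proof -
  have "u i j \<le> (\<Sum>j<n. u i j)"
    by (rule member_le_sum) (use assms in \<open>auto simp: unit_sum_profile_def\<close>)
  thus ?thesis using assms by (simp add: unit_sum_profile_def)
qed

lemma mu_lt: "\<mu> permutes {..<n} \<Longrightarrow> x < n \<Longrightarrow> \<mu> x < n"
  using permutes_in_image[of \<mu> "{..<n}" x] by simp

definition phi :: "(nat \<Rightarrow> nat \<Rightarrow> real) \<Rightarrow> (nat \<Rightarrow> nat) \<Rightarrow> nat set \<Rightarrow> nat set \<Rightarrow> real" where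
  "phi u \<mu> A S = (\<Sum>i\<in>{i\<in>A. \<mu> i \<in> S}. u i (\<mu> i))"

lemma TT_empty: "TT u {} S = 0" by (simp add: TT_def)

lemma phi_nonneg:
  assumes "unit_sum_profile n u" "\<mu> permutes {..<n}" "A \<subseteq> {..<n}"
  shows "0 \<le> phi u \<mu> A S"
  unfolding phi_def
  by (rule sum_nonneg) (use assms in \<open>auto intro!: u_nonneg[OF assms(1)] mu_lt[OF assms(2)]\<close>)

lemma phi_step:
  assumes us: "unit_sum_profile n u" and mu: "\<mu> permutes {..<n}" and A: "A \<subseteq> {..<n}"
  shows "phi u \<mu> A S - 2 \<le> phi u \<mu> (A - {i}) (S - {p})"
proof -
  let ?B = "{i'\<in>A. \<mu> i' \<in> S}" and ?B' = "{i'\<in>A-{i}. \<mu> i' \<in> S-{p}}"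
  have fin: "finite ?B" by (rule finite_subset[of _ "{..<n}"]) (use A in auto)
  have sub: "?B' \<subseteq> ?B" by auto
  have "phi u \<mu> A S = (\<Sum>i'\<in>?B'. u i' (\<mu> i')) + (\<Sum>i'\<in>?B - ?B'. u i' (\<mu> i'))"
    unfolding phi_def by (subst sum.subset_diff[OF sub fin]) (rule add.commute)
  moreover have "(\<Sum>i'\<in>?B - ?B'. u i' (\<mu> i')) \<le> of_nat (card (?B - ?B')) * 1"
    by (rule sum_bounded_above) (use A in \<open>auto intro!: u_le1[OF us] mu_lt[OF mu]\<close>)
  moreover have "card (?B - ?B') \<le> 2"
  proof -
    have "?B - ?B' \<subseteq> {i, inv \<mu> p}"
    proof
      fix x assume "x \<in> ?B - ?B'"
      hence "x = i \<or> \<mu> x = p" by blast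
      thus "x \<in> {i, inv \<mu> p}" using permutes_inverses(2)[OF mu, of x] by auto
    qed
    hence "card (?B - ?B') \<le> card {i, inv \<mu> p}" by (rule card_mono[rotated]) simp
    also have "\<dots> \<le> 2" by (simp add: card_insert_le_m1)
    finally show ?thesis .
  qed
  ultimately show ?thesis unfolding phi_def by linarith
qed

lemma quad_aux:
  fixes \<phi> k N :: real
  assumes "0 \<le> \<phi>" "0 < k" "k \<le> N"
  shows "k / N * \<phi>\<^sup>2 / 4 \<le> \<phi> + k / N * (max 0 (\<phi> - 2))\<^sup>2 / 4"
proof -
  define D where "D = \<phi>\<^sup>2 / 4 - (max 0 (\<phi> - 2))\<^sup>2 / 4"
  have D0: "0 \<le> D"
  proof (cases "\<phi> \<ge> 2")
    case True thus ?thesis unfolding D_def by (simp add: power2_eq_square max_def algebra_simps)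
  next
    case False thus ?thesis unfolding D_def using assms by (simp add: max_def)
  qed
  have D1: "D \<le> \<phi>"
  proof (cases "\<phi> \<ge> 2")
    case True thus ?thesis unfolding D_def by (simp add: power2_eq_square max_def field_simps)
  next
    case False
    have "\<phi> * \<phi> \<le> 2 * \<phi>" using False assms(1) by (intro mult_right_mono) auto
    hence "\<phi> * \<phi> \<le> 4 * \<phi>" using assms(1) by linarith
    thus ?thesis unfolding D_def using False by (simp add: max_def power2_eq_square)
  qed
  have "k / N * D \<le> 1 * D" by (rule mult_right_mono) (use assms D0 in auto)
  moreover have "k / N * \<phi>\<^sup>2 / 4 - k / N * (max 0 (\<phi> - 2))\<^sup>2 / 4 = k / N * D"
    by (simp add: D_def algebra_simps)
  ultimately show ?thesis using D1 by linarith
qed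



lemma TT_phi:
  assumes us: "unit_sum_profile n u" and mu: "\<mu> permutes {..<n}"
  shows "card A = m \<Longrightarrow> A \<subseteq> {..<n} \<Longrightarrow> S \<subseteq> {..<n} \<Longrightarrow> card S = m \<Longrightarrow>
         fact m / real n * (phi u \<mu> A S)\<^sup>2 / 4 \<le> TT u A S"
proof (induction m arbitrary: A S)
  case 0
  have "finite A" using 0 finite_subset by blast
  hence "A = {}" using 0 by simp
  thus ?case by (simp add: TT_empty phi_def)
next
  case (Suc m)
  have finA: "finite A" by (rule finite_subset[of _ "{..<n}"]) (use Suc in auto)
  have finS: "finite S" by (rule finite_subset[of _ "{..<n}"]) (use Suc in auto)
  have Ane: "A \<noteq> {}" using Suc by auto
  have Sne: "S \<noteq> {}" using Suc by auto
  have mn: "Suc m \<le> n" using card_mono[OF _ Suc.prems(2)] Suc.prems(1) by simp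
  define \<phi> where "\<phi> = phi u \<mu> A S"
  define M where "M = max 0 (\<phi> - 2)"
  have p_in: "pk u i S \<in> S" and p_max: "\<forall>y\<in>S. u i y \<le> u i (pk u i S)" for i
    using pk_prop[OF finS Sne, of "u i"] by auto
  have h1: "fact m / real n * M\<^sup>2 / 4 \<le> TT u (A - {i}) (S - {pk u i S})" if i: "i \<in> A" for i
  proof -
    let ?p = "pk u i S"
    have IH: "fact m / real n * (phi u \<mu> (A - {i}) (S - {?p}))\<^sup>2 / 4 \<le> TT u (A - {i}) (S - {?p})"
      by (rule Suc.IH) (use Suc.prems i p_in[of i] finA finS in auto)
    have a: "\<phi> - 2 \<le> phi u \<mu> (A - {i}) (S - {?p})"
      unfolding \<phi>_def by (rule phi_step[OF us mu Suc.prems(2)])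
    have b: "0 \<le> phi u \<mu> (A - {i}) (S - {?p})"
      by (rule phi_nonneg[OF us mu]) (use Suc.prems in auto)
    have "M\<^sup>2 \<le> (phi u \<mu> (A - {i}) (S - {?p}))\<^sup>2"
      by (rule power_mono) (use a b in \<open>auto simp: M_def\<close>)
    hence "fact m / real n * M\<^sup>2 / 4 \<le> fact m / real n * (phi u \<mu> (A - {i}) (S - {?p}))\<^sup>2 / 4"
      by (intro divide_right_mono mult_left_mono) auto
    thus ?thesis using IH by linarith
  qed
  have h2: "\<phi> \<le> (\<Sum>i\<in>A. u i (pk u i S))"
  proof -
    have "\<phi> = (\<Sum>i\<in>{i\<in>A. \<mu> i \<in> S}. u i (\<mu> i))" by (simp add: \<phi>_def phi_def)
    also have "\<dots> \<le> (\<Sum>i\<in>{i\<in>A. \<mu> i \<in> S}. u i (pk u i S))"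
      by (rule sum_mono) (use p_max in auto)
    also have "\<dots> \<le> (\<Sum>i\<in>A. u i (pk u i S))"
    proof (rule sum_mono2[OF finA])
      show "{i \<in> A. \<mu> i \<in> S} \<subseteq> A" by auto
      show "0 \<le> u b (pk u b S)" if "b \<in> A - {i \<in> A. \<mu> i \<in> S}" for b
        using that p_in[of b] Suc.prems(2,3) u_nonneg[OF us] by blast
    qed
    finally show ?thesis .
  qed
  have "TT u A S = (\<Sum>i\<in>A. fact m * u i (pk u i S) + TT u (A-{i}) (S - {pk u i S}))"
    using TT_rec[OF finA Ane, of u S] Suc.prems(1) by simp
  also have "\<dots> = fact m * (\<Sum>i\<in>A. u i (pk u i S)) + (\<Sum>i\<in>A. TT u (A-{i}) (S - {pk u i S}))"
    by (simp add: sum.distrib sum_distrib_left)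
  also have "\<dots> \<ge> fact m * \<phi> + (\<Sum>i\<in>A. fact m / real n * M\<^sup>2 / 4)"
    using h2 h1 by (intro add_mono mult_left_mono sum_mono) auto
  finally have T: "fact m * \<phi> + real (Suc m) * (fact m / real n * M\<^sup>2 / 4) \<le> TT u A S"
    using Suc.prems(1) by simp
  have q: "real (Suc m) / real n * \<phi>\<^sup>2 / 4 \<le> \<phi> + real (Suc m) / real n * M\<^sup>2 / 4"
    unfolding M_def by (rule quad_aux) (use mn phi_nonneg[OF us mu Suc.prems(2)] in \<open>auto simp: \<phi>_def\<close>)
  have "fact (Suc m) / real n * \<phi>\<^sup>2 / 4 = fact m * (real (Suc m) / real n * \<phi>\<^sup>2 / 4)"
    by (simp add: algebra_simps)
  also have "\<dots> \<le> fact m * (\<phi> + real (Suc m) / real n * M\<^sup>2 / 4)"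
    by (rule mult_left_mono[OF q]) simp
  also have "\<dots> = fact m * \<phi> + real (Suc m) * (fact m / real n * M\<^sup>2 / 4)"
    by (simp add: algebra_simps)
  finally show ?case using T unfolding \<phi>_def by linarith
qed



definition LL :: "(nat \<Rightarrow> nat \<Rightarrow> real) \<Rightarrow> nat \<Rightarrow> nat \<Rightarrow> real list" where
  "LL u n i = sorted_list_of_set (u i ` {..<n})"

lemma LL_props:
  assumes us: "unit_sum_profile n u" and i: "i < n"
  shows "sorted (LL u n i)" "distinct (LL u n i)" "set (LL u n i) = u i ` {..<n}" "length (LL u n i) = n"
proof -
  have inj: "inj_on (u i) {..<n}" using us i by (simp add: unit_sum_profile_def)
  show "sorted (LL u n i)" "distinct (LL u n i)" "set (LL u n i) = u i ` {..<n}"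
    by (simp_all add: LL_def)
  show "length (LL u n i) = n"
    by (simp add: LL_def card_image[OF inj])
qed

lemma sum_LL:
  assumes us: "unit_sum_profile n u" and i: "i < n"
  shows "(\<Sum>l<n. LL u n i ! l) = 1"
proof -
  have inj: "inj_on (u i) {..<n}" using us i by (simp add: unit_sum_profile_def)
  have "(\<Sum>l<n. LL u n i ! l) = sum_list (LL u n i)"
    by (simp add: sum_list_sum_nth LL_props[OF us i] atLeast0LessThan)
  also have "\<dots> = sum id (set (LL u n i))"
    using distinct_sum_list_conv_Sum[OF LL_props(2)[OF us i]] by simp
  also have "\<dots> = (\<Sum>j<n. u i j)"
    by (simp add: LL_props[OF us i] sum.reindex[OF inj])
  also have "\<dots> = 1" using us i by (simp add: unit_sum_profile_def)
  finally show ?thesis .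
qed

lemma best_ge:
  assumes us: "unit_sum_profile n u" and i: "i < n" and S: "S \<subseteq> {..<n}" and k: "card S = k" "1 \<le> k"
  shows "\<exists>j\<in>S. LL u n i ! (k-1) \<le> u i j"
proof (rule ccontr)
  assume "\<not> ?thesis"
  hence lt: "\<forall>j\<in>S. u i j < LL u n i ! (k-1)" by auto
  let ?L = "LL u n i"
  have inj: "inj_on (u i) {..<n}" using us i by (simp add: unit_sum_profile_def)
  have sub: "u i ` S \<subseteq> set (take (k-1) ?L)"
  proof
    fix x assume "x \<in> u i ` S"
    then obtain j where j: "j \<in> S" "x = u i j" by auto
    have "x \<in> set ?L" using j S LL_props(3)[OF us i] by auto
    then obtain r where r: "r < length ?L" "?L ! r = x" by (auto simp: in_set_conv_nth)
    have "r < k - 1"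
    proof (rule ccontr)
      assume "\<not> r < k - 1"
      hence "?L ! (k-1) \<le> ?L ! r" using r(1) LL_props(1)[OF us i] by (intro sorted_nth_mono) auto
      thus False using lt j r(2) by auto
    qed
    thus "x \<in> set (take (k-1) ?L)" using r by (auto simp: in_set_conv_nth intro!: exI[of _ r])
  qed
  have "card (u i ` S) = k" using card_image[OF inj_on_subset[OF inj S]] k by simp
  moreover have "card (u i ` S) \<le> card (set (take (k-1) ?L))" by (rule card_mono[OF _ sub]) simp
  moreover have "card (set (take (k-1) ?L)) \<le> k - 1"
    using card_length[of "take (k-1) ?L"] by simp
  ultimately show False using k by linarith
qed

lemma sum_minus_one:
  fixes X :: "nat \<Rightarrow> real"
  assumes "finite A"
  shows "(\<Sum>i\<in>A. \<Sum>i'\<in>A-{i}. X i') = real (card A - 1) * (\<Sum>i\<in>A. X i)"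
proof -
  have "(\<Sum>i\<in>A. \<Sum>i'\<in>A-{i}. X i') = (\<Sum>i\<in>A. (\<Sum>i\<in>A. X i) - X i)"
    by (rule sum.cong) (use assms in \<open>auto simp: sum_diff1\<close>)
  also have "\<dots> = real (card A) * (\<Sum>i\<in>A. X i) - (\<Sum>i\<in>A. X i)"
    by (simp add: sum_subtractf)
  also have "\<dots> = real (card A - 1) * (\<Sum>i\<in>A. X i)"
    using assms by (cases "card A") (simp_all add: algebra_simps)
  finally show ?thesis .
qed

lemma TT_Q:
  assumes us: "unit_sum_profile n u"
  shows "card A = m \<Longrightarrow> A \<subseteq> {..<n} \<Longrightarrow> S \<subseteq> {..<n} \<Longrightarrow> card S = m \<Longrightarrow>
         fact (m - 1) * (\<Sum>i\<in>A. \<Sum>l<m. LL u n i ! l) \<le> TT u A S"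
proof (induction m arbitrary: A S)
  case 0
  have "finite A" using 0 finite_subset by blast
  hence "A = {}" using 0 by simp
  thus ?case by (simp add: TT_empty)
next
  case (Suc m)
  have finA: "finite A" by (rule finite_subset[of _ "{..<n}"]) (use Suc in auto)
  have finS: "finite S" by (rule finite_subset[of _ "{..<n}"]) (use Suc in auto)
  have Ane: "A \<noteq> {}" using Suc by auto
  have Sne: "S \<noteq> {}" using Suc by auto
  define X where "X i = (\<Sum>l<m. LL u n i ! l)" for i
  have p_in: "pk u i S \<in> S" and p_max: "\<forall>y\<in>S. u i y \<le> u i (pk u i S)" for i
    using pk_prop[OF finS Sne, of "u i"] by auto
  have h1: "fact (m - 1) * (\<Sum>i'\<in>A-{i}. X i') \<le> TT u (A - {i}) (S - {pk u i S})" if i: "i \<in> A" for i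
    unfolding X_def by (rule Suc.IH) (use Suc.prems i p_in[of i] finA finS in auto)
  have h2: "LL u n i ! m \<le> u i (pk u i S)" if i: "i \<in> A" for i
  proof -
    obtain j where "j \<in> S" "LL u n i ! (Suc m - 1) \<le> u i j"
      using best_ge[OF us _ Suc.prems(3,4)] i Suc.prems(2) by fastforce
    thus ?thesis using p_max[of i] by force
  qed
  have e: "fact (m - 1) * (real m * (\<Sum>i\<in>A. X i)) = fact m * (\<Sum>i\<in>A. X i)"
  proof (cases m)
    case 0 thus ?thesis by (simp add: X_def)
  next
    case (Suc k) thus ?thesis by (simp add: algebra_simps)
  qed
  have "TT u A S = (\<Sum>i\<in>A. fact m * u i (pk u i S) + TT u (A-{i}) (S - {pk u i S}))"
    using TT_rec[OF finA Ane, of u S] Suc.prems(1) by simp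
  also have "\<dots> = fact m * (\<Sum>i\<in>A. u i (pk u i S)) + (\<Sum>i\<in>A. TT u (A-{i}) (S - {pk u i S}))"
    by (simp add: sum.distrib sum_distrib_left)
  also have "\<dots> \<ge> fact m * (\<Sum>i\<in>A. LL u n i ! m) + (\<Sum>i\<in>A. fact (m - 1) * (\<Sum>i'\<in>A-{i}. X i'))"
    using h2 h1 by (intro add_mono mult_left_mono sum_mono) auto
  finally have T: "fact m * (\<Sum>i\<in>A. LL u n i ! m) + fact (m - 1) * (\<Sum>i\<in>A. \<Sum>i'\<in>A-{i}. X i') \<le> TT u A S"
    by (simp add: sum_distrib_left)
  have "(\<Sum>i\<in>A. \<Sum>i'\<in>A-{i}. X i') = real m * (\<Sum>i\<in>A. X i)"
    using sum_minus_one[OF finA, of X] Suc.prems(1) by simp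
  hence "fact (m - 1) * (\<Sum>i\<in>A. \<Sum>i'\<in>A-{i}. X i') = fact (m - 1) * (real m * (\<Sum>i\<in>A. X i))"
    by (simp only:)
  also have "\<dots> = fact m * (\<Sum>i\<in>A. X i)" by (rule e)
  finally have T2: "fact m * (\<Sum>i\<in>A. LL u n i ! m) + fact m * (\<Sum>i\<in>A. X i) \<le> TT u A S"
    using T by linarith
  have "fact (Suc m - 1) * (\<Sum>i\<in>A. \<Sum>l<Suc m. LL u n i ! l)
        = fact m * (\<Sum>i\<in>A. LL u n i ! m) + fact m * (\<Sum>i\<in>A. X i)"
    by (simp add: X_def sum.distrib algebra_simps)
  thus ?case using T2 by linarith
qed



lemma RP_eq: "RP_welfare n u = TT u {..<n} {..<n} / fact n"
  by (simp add: RP_welfare_def TT_def welfare_def)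

lemma TT_ge_fact:
  assumes us: "unit_sum_profile n u" and n: "1 \<le> n"
  shows "fact n \<le> TT u {..<n} {..<n}"
proof -
  have "fact (n - 1) * (\<Sum>i\<in>{..<n}. \<Sum>l<n. LL u n i ! l) \<le> TT u {..<n} {..<n}"
    by (rule TT_Q[OF us]) auto
  moreover have "(\<Sum>i\<in>{..<n}. \<Sum>l<n. LL u n i ! l) = real n"
    using sum_LL[OF us] by simp
  moreover have "fact (n - 1) * real n = (fact n :: real)"
    using n by (cases n) (simp_all add: algebra_simps)
  ultimately show ?thesis by simp
qed

lemma opt_props:
  assumes us: "unit_sum_profile n u" and n: "1 \<le> n"
  shows "\<exists>\<mu>. \<mu> permutes {..<n} \<and> opt_welfare n u = welfare n u \<mu>" "0 < opt_welfare n u"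
proof -
  let ?W = "{welfare n u \<mu> | \<mu>. \<mu> permutes {..<n}}"
  have W: "?W = welfare n u ` {\<mu>. \<mu> permutes {..<n}}" by auto
  have fin: "finite ?W" unfolding W by (rule finite_imageI) (rule finite_permutations, simp)
  have ne: "?W \<noteq> {}" using permutes_id by blast
  have "Max ?W \<in> ?W" by (rule Max_in[OF fin ne])
  thus "\<exists>\<mu>. \<mu> permutes {..<n} \<and> opt_welfare n u = welfare n u \<mu>"
    unfolding opt_welfare_def by auto
  obtain j where j: "j < n" "0 < u 0 j"
  proof (rule ccontr)
    assume "\<not> thesis"
    hence "\<forall>j<n. u 0 j \<le> 0" using that by force
    hence "(\<Sum>j<n. u 0 j) \<le> 0" by (intro sum_nonpos) auto
    thus False using us n by (simp add: unit_sum_profile_def)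
  qed
  have tp: "transpose 0 j permutes {..<n}" by (rule permutes_swap_id) (use j n in auto)
  have "u 0 j = u 0 (transpose 0 j 0)" by simp
  also have "\<dots> \<le> welfare n u (transpose 0 j)"
    unfolding welfare_def
    by (rule member_le_sum) (use n in \<open>auto intro!: u_nonneg[OF us] mu_lt[OF tp]\<close>)
  also have "\<dots> \<le> Max ?W" by (rule Max_ge[OF fin]) (use tp in blast)
  finally show "0 < opt_welfare n u" unfolding opt_welfare_def using j by linarith
qed

lemma ratio_bound:
  assumes us: "unit_sum_profile n u" and n: "1 \<le> n"
  shows "(1/2) / sqrt (real n) \<le> RP_welfare n u / opt_welfare n u"
proof -
  obtain \<mu> where mu: "\<mu> permutes {..<n}" and t: "opt_welfare n u = welfare n u \<mu>"
    using opt_props(1)[OF us n] by blast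
  define t where "t = opt_welfare n u"
  have tpos: "0 < t" using opt_props(2)[OF us n] by (simp add: t_def)
  define R where "R = RP_welfare n u"
  have fpos: "(0::real) < fact n" by simp
  have R1: "1 \<le> R" unfolding R_def RP_eq using TT_ge_fact[OF us n] fpos by simp
  have phit: "phi u \<mu> {..<n} {..<n} = t"
    unfolding t_def t phi_def welfare_def using mu_lt[OF mu] by (intro sum.cong) auto
  have "fact n / real n * t\<^sup>2 / 4 \<le> TT u {..<n} {..<n}"
    using TT_phi[OF us mu, of "{..<n}" n "{..<n}"] phit by simp
  hence R2: "t\<^sup>2 / (4 * real n) \<le> R" unfolding R_def RP_eq using fpos
    by (simp add: field_simps)
  define s where "s = sqrt (real n)"
  have spos: "0 < s" using n by (simp add: s_def)
  have ss: "s * s = real n" using n by (simp add: s_def)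
  have key: "t \<le> 2 * s * R"
  proof (cases "t \<le> 2 * s")
    case True
    have "2 * s * 1 \<le> 2 * s * R" by (rule mult_left_mono) (use R1 spos in auto)
    thus ?thesis using True by linarith
  next
    case False
    have npos: "0 < real n" using n by simp
    have "t * t \<le> 4 * (s * s) * R" using R2 ss npos by (simp add: field_simps power2_eq_square)
    also have "\<dots> = (2 * s) * (2 * s * R)" by (simp add: algebra_simps)
    also have "\<dots> \<le> t * (2 * s * R)"
      by (rule mult_right_mono) (use False R1 spos in auto)
    finally have "t * t \<le> t * (2 * s * R)" .
    thus ?thesis using tpos by simp
  qed
  have "(1/2) / s \<le> R / t" using key spos tpos by (simp add: field_simps)
  thus ?thesis by (simp add: R_def t_def s_def)
qed

lemma exists_profile: "unit_sum_profile n (\<lambda>i j. 2 * (real j + 1) / (real n * (real n + 1)))"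
proof -
  have g: "(\<Sum>j<n. real j + 1) = real n * (real n + 1) / 2" for n
    by (induction n) (simp_all add: field_simps)
  show ?thesis
    unfolding unit_sum_profile_def
  proof (intro allI impI conjI)
    fix i assume i: "i < n"
    show "inj_on (\<lambda>j. 2 * (real j + 1) / (real n * (real n + 1))) {..<n}"
    proof -
      have "real n * (real n + 1) \<noteq> 0" using i by simp
      thus ?thesis by (auto simp: inj_on_def field_simps)
    qed
    show "0 \<le> 2 * (real j + 1) / (real n * (real n + 1))" for j by auto
    have "(\<Sum>j<n. 2 * (real j + 1) / (real n * (real n + 1))) = 2 * (\<Sum>j<n. real j + 1) / (real n * (real n + 1))"
      by (simp add: sum_divide_distrib sum_distrib_left)
    also have "\<dots> = 1" using i by (simp add: g)
    finally show "(\<Sum>j<n. 2 * (real j + 1) / (real n * (real n + 1))) = 1" .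
  qed
qed

theorem lemma7:
  shows "\<exists>c::real > 0. \<forall>n::nat \<ge> 1. approx_ratio_RP n \<ge> c / sqrt (real n)"
proof (intro exI[of _ "1/2"] conjI allI impI)
  fix n :: nat assume n: "1 \<le> n"
  show "(1/2) / sqrt (real n) \<le> approx_ratio_RP n"
    unfolding approx_ratio_RP_def
    by (rule cINF_greatest) (use exists_profile ratio_bound n in auto)
qed simp


end
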